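(* Let $\mathbb{T}=\mathbb{R}/2\pi\mathbb{Z}$. For $j=1,\dots,m$ let $c_j\in C^\infty(\mathbb{T};\mathbb{C})$ and let $P_j(D_x)$ be a pseudo-differential operator on $\mathbb{T}^n$, $P_j(D_x)u(x)=\sum_{\xi\in\mathbb{Z}^n}e^{ix\cdot\xi}p_j(\xi)\widehat{u}(\xi)$, with $|p_j(\xi)|\le C|\xi|^{\nu_j}$ for all $\xi\in\mathbb{Z}^n$ (some $C>0$, $\nu_j\in\mathbb{R}$). Let $L_j=D_t+c_j(t)P_j(D_x)$ on $\mathbb{T}^{n+1}$, $L=L_1\circ\cdots\circ L_m$, and $\mathcal{M}_j(t,\xi)=c_j(t)p_j(\xi)$. Assume that for each $j$ there is a positive constant $\eta_j$ with $\operatorname{Im}\mathcal{M}_j(t,\xi)\ge-\eta_j$ for all $t\in\mathbb{T}$, $\xi\in\mathbb{Z}^n$. Suppose that for some $k\in\{1,\dots,m\}$ there is a singular solution $u_k$ of $L_k$, i.e. $u_k\in\mathcal{D}'(\mathbb{T}^{n+1})\setminus C^\infty(\mathbb{T}^{n+1})$ with $L_ku_k\in C^\infty(\mathbb{T}^{n+1})$, and distributions $u_{k+1},\dots,u_m\in\mathcal{D}'(\mathbb{T}^{n+1})$ satisfying $$u_{k+j}=L_{k+j+1}u_{k+j+1},\qquad j\in\{0,\dots,m-k-1\}.$$ Then $L$ is not globally hypoelliptic.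
   Context: $D_t=-i\partial_t$; $\widehat{u}(\xi)=(2\pi)^{-n}\int_{\mathbb{T}^n}e^{-ix\cdot\xi}u(x)\,dx$. An operator $\mathcal{P}$ on $\mathbb{T}^N$ is globally hypoelliptic if $u\in\mathcal{D}'(\mathbb{T}^N)$ and $\mathcal{P}u\in C^\infty(\mathbb{T}^N)$ imply $u\in C^\infty(\mathbb{T}^N)$. *)

theory Defs
  imports "HOL-Analysis.Analysis"
begin

text \<open>Distributions on the torus T^(n+1) = T_t x T^n_x are represented by their
Fourier coefficients, indexed by (tau, xi) in Z x Z^n, with the convention
u(t,x) = sum exp(i(t tau + x.xi)) uhat(tau,xi).\<close>

type_synonym ('n) coef = "int \<times> (int ^ 'n) \<Rightarrow> complex"

definition znorm :: "int ^ ('n::finite) \<Rightarrow> real" where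
  "znorm \<xi> = sqrt (\<Sum>i\<in>UNIV. (real_of_int (\<xi> $ i))\<^sup>2)"

definition znorm1 :: "int \<times> (int ^ ('n::finite)) \<Rightarrow> real" where
  "znorm1 z = sqrt ((real_of_int (fst z))\<^sup>2 + (znorm (snd z))\<^sup>2)"

definition is_distr :: "('n::finite) coef \<Rightarrow> bool" where
  "is_distr u \<longleftrightarrow> (\<exists>C k. \<forall>z. norm (u z) \<le> C * (1 + znorm1 z) ^ k)"

definition is_smooth :: "('n::finite) coef \<Rightarrow> bool" where
  "is_smooth u \<longleftrightarrow> (\<forall>k::nat. \<exists>C. \<forall>z. norm (u z) * (1 + znorm1 z) ^ k \<le> C)"

definition smooth_periodic :: "(real \<Rightarrow> complex) \<Rightarrow> bool" where
  "smooth_periodic c \<longleftrightarrow>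
     (\<forall>t. c (t + 2 * pi) = c t) \<and>
     (\<exists>ds :: nat \<Rightarrow> real \<Rightarrow> complex. ds 0 = c \<and>
        (\<forall>k t. (ds k has_vector_derivative ds (Suc k) t) (at t)))"

definition fourier_coeff :: "(real \<Rightarrow> complex) \<Rightarrow> int \<Rightarrow> complex" where
  "fourier_coeff c \<tau> =
     (1 / (2 * pi)) * integral {0..2*pi} (\<lambda>t. exp (- \<i> * of_int \<tau> * of_real t) * c t)"

text \<open>L = D_t + c(t) P(D_x) acting on Fourier coefficients:
  D_t multiplies by tau, P(D_x) multiplies by p(xi), multiplication by c(t) is
  convolution in tau with the Fourier coefficients of c.\<close>
definition Lop :: "(real \<Rightarrow> complex) \<Rightarrow> (int ^ ('n::finite) \<Rightarrow> complex) \<Rightarrow> 'n coef \<Rightarrow> 'n coef" where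
  "Lop c p u = (\<lambda>(\<tau>, \<xi>). of_int \<tau> * u (\<tau>, \<xi>)
      + infsum (\<lambda>\<sigma>. fourier_coeff c (\<tau> - \<sigma>) * p \<xi> * u (\<sigma>, \<xi>)) UNIV)"

fun Lprod :: "(nat \<Rightarrow> real \<Rightarrow> complex) \<Rightarrow> (nat \<Rightarrow> int ^ ('n::finite) \<Rightarrow> complex) \<Rightarrow> nat
               \<Rightarrow> 'n coef \<Rightarrow> 'n coef" where
  "Lprod c p 0 = id"
| "Lprod c p (Suc m) = Lprod c p m \<circ> Lop (c (Suc m)) (p (Suc m))"

definition globally_hypoelliptic :: "(('n::finite) coef \<Rightarrow> 'n coef) \<Rightarrow> bool" where
  "globally_hypoelliptic A \<longleftrightarrow> (\<forall>u. is_distr u \<and> is_smooth (A u) \<longrightarrow> is_smooth u)"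

end

theory Submission
  imports Defs
begin

lemma nat_sq_summable: "(\<lambda>n::nat. 1 / (1 + real n)^2) summable_on UNIV"
proof -
  have "summable (\<lambda>n::nat. inverse (real n) ^ 2)"
    using inverse_power_summable[of 2] by (simp add: power_inverse)
  hence "summable (\<lambda>n::nat. inverse (real (Suc n)) ^ 2)"
    by (subst summable_Suc_iff)
  hence "summable (\<lambda>n::nat. 1 / (1 + real n)^2)"
    by (simp add: power_inverse divide_inverse add.commute)
  thus ?thesis by (subst summable_on_UNIV_nonneg_real_iff) auto
qed

lemma int_sq_summable: "(\<lambda>s::int. 1 / (1 + \<bar>real_of_int s\<bar>)^2) summable_on UNIV"
proof -
  have U: "(UNIV::int set) = range int \<union> range (\<lambda>n. - int (Suc n))"
  proof -
    have "x \<in> range int \<union> range (\<lambda>n. - int (Suc n))" for x :: int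
    proof (cases "x \<ge> 0")
      case True thus ?thesis by (metis UnI1 nonneg_int_cases rangeI)
    next
      case False
      hence "x = - int (Suc (nat (-x - 1)))" by simp
      thus ?thesis by blast
    qed
    thus ?thesis by blast
  qed
  have a: "(\<lambda>s::int. 1 / (1 + \<bar>real_of_int s\<bar>)^2) summable_on range int"
    by (subst summable_on_reindex) (auto simp: o_def nat_sq_summable inj_on_def)
  have "(\<lambda>n::nat. 1 / (1 + real (Suc n))^2) summable_on UNIV"
    by (rule summable_on_comparison_test[OF nat_sq_summable])
       (auto simp: divide_simps power_mono)
  hence b: "(\<lambda>s::int. 1 / (1 + \<bar>real_of_int s\<bar>)^2) summable_on range (\<lambda>n. - int (Suc n))"
    by (subst summable_on_reindex) (auto simp: o_def inj_on_def)
  show ?thesis unfolding U by (rule summable_on_union[OF a b])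
qed

lemma E_deriv: "((\<lambda>t::real. exp (- \<i> * of_int \<tau> * of_real t)) has_vector_derivative
   (- \<i> * of_int \<tau>) * exp (- \<i> * of_int \<tau> * of_real t)) (at t within S)"
proof -
  have "((\<lambda>z. exp (- \<i> * of_int \<tau> * z)) has_field_derivative
     (- \<i> * of_int \<tau>) * exp (- \<i> * of_int \<tau> * of_real t)) (at (of_real t))"
    by (auto intro!: derivative_eq_intros simp: algebra_simps)
  thus ?thesis by (rule has_vector_derivative_real_field)
qed

lemma fc_deriv:
  assumes per: "\<And>t. c (t + 2*pi) = c t"
    and der: "\<And>t. (c has_vector_derivative d t) (at t)"
    and cd: "continuous_on UNIV d"
  shows "fourier_coeff d \<tau> = \<i> * of_int \<tau> * fourier_coeff c \<tau>"
proof -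
  define E where "E = (\<lambda>t::real. exp (- \<i> * of_int \<tau> * of_real t))"
  have cc: "continuous_on UNIV c"
    using der by (meson continuous_on_vector_derivative has_vector_derivative_at_within)
  have cE: "continuous_on UNIV E" unfolding E_def by (intro continuous_intros)
  have "((\<lambda>t. E t * c t) has_vector_derivative ((- \<i> * of_int \<tau>) * E t * c t + E t * d t)) (at t within {0..2*pi})" for t
    unfolding E_def
    by (rule derivative_eq_intros E_deriv has_vector_derivative_at_within[OF der] refl)+
       (simp add: algebra_simps)
  from fundamental_theorem_of_calculus[OF _ this]
  have "((\<lambda>t. (- \<i> * of_int \<tau>) * E t * c t + E t * d t) has_integral (E (2*pi) * c (2*pi) - E 0 * c 0)) {0..2*pi}"
    by simp
  moreover have "E (2*pi) = 1" unfolding E_def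
    using exp_eq_1[of "- \<i> * of_int \<tau> * of_real (2*pi)"] by (simp, intro exI[of _ "-\<tau>"], simp)
  ultimately have I: "((\<lambda>t. (- \<i> * of_int \<tau>) * (E t * c t) + E t * d t) has_integral 0) {0..2*pi}"
    using per[of 0] by (simp add: E_def mult.assoc)
  have i1: "(\<lambda>t. E t * c t) integrable_on {0..2*pi}"
    by (intro integrable_continuous_real continuous_intros continuous_on_subset[OF cE] continuous_on_subset[OF cc]) auto
  have i2: "(\<lambda>t. E t * d t) integrable_on {0..2*pi}"
    by (intro integrable_continuous_real continuous_intros continuous_on_subset[OF cE] continuous_on_subset[OF cd]) auto
  have "((\<lambda>t. (- \<i> * of_int \<tau>) * (E t * c t)) has_integral (- \<i> * of_int \<tau>) * integral {0..2*pi} (\<lambda>t. E t * c t)) {0..2*pi}"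
    by (rule has_integral_mult_right) (use i1 in auto)
  from has_integral_diff[OF I this]
  have "((\<lambda>t. E t * d t) has_integral (\<i> * of_int \<tau> * integral {0..2*pi} (\<lambda>t. E t * c t))) {0..2*pi}"
    by simp
  hence "integral {0..2*pi} (\<lambda>t. E t * d t) = \<i> * of_int \<tau> * integral {0..2*pi} (\<lambda>t. E t * c t)"
    by (rule integral_unique)
  thus ?thesis unfolding fourier_coeff_def E_def by simp
qed
lemma fc_bounded:
  assumes "continuous_on UNIV d"
  shows "\<exists>M. \<forall>\<tau>. norm (fourier_coeff d \<tau>) \<le> M"
proof -
  have "continuous_on {0..2*pi} d" using continuous_on_subset[OF assms] by blast
  from continuous_on_compact_bound[OF compact_Icc this]
  obtain B where B: "B \<ge> 0" "\<And>t. t \<in> {0..2*pi} \<Longrightarrow> norm (d t) \<le> B" by blast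
  have "norm (fourier_coeff d \<tau>) \<le> B" for \<tau>
  proof -
    have "norm (integral {0..2*pi} (\<lambda>t. exp (- \<i> * of_int \<tau> * of_real t) * d t)) \<le> B * (2*pi - 0)"
    proof (rule integral_bound)
      show "continuous_on {0..2*pi} (\<lambda>t. exp (- \<i> * of_int \<tau> * of_real t) * d t)"
        by (intro continuous_intros continuous_on_subset[OF assms]) auto
      fix t assume "t \<in> {0..2*pi}"
      thus "norm (exp (- \<i> * of_int \<tau> * of_real t) * d t) \<le> B"
        by (simp add: norm_mult norm_exp_eq_Re B)
    qed simp
    thus ?thesis unfolding fourier_coeff_def by (simp add: norm_mult norm_divide pos_divide_le_eq mult.commute)
  qed
  thus ?thesis by blast
qed

lemma pow_split: "(1 + x)^N \<le> 2^N * (1 + x^N)" if "x \<ge> (0::real)"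
proof (cases "x \<le> 1")
  case True
  have "(1+x)^N \<le> 2^N" using True that by (intro power_mono) auto
  also have "\<dots> \<le> 2^N * (1 + x^N)" using that by simp
  finally show ?thesis .
next
  case False
  have "(1+x)^N \<le> (2*x)^N" using False that by (intro power_mono) auto
  also have "\<dots> \<le> 2^N * (1 + x^N)" by (simp add: power_mult_distrib)
  finally show ?thesis .
qed

lemma fc_rapid:
  assumes "smooth_periodic c"
  shows "\<exists>A. \<forall>s. norm (fourier_coeff c s) * (1 + \<bar>real_of_int s\<bar>)^N \<le> A"
proof -
  obtain ds where per: "\<And>t. c (t + 2*pi) = c t" and ds0: "ds 0 = c"
    and der: "\<And>k t. (ds k has_vector_derivative ds (Suc k) t) (at t)"
    using assms unfolding smooth_periodic_def by blast
  have cont: "continuous_on UNIV (ds k)" for k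
    using der by (meson continuous_on_vector_derivative has_vector_derivative_at_within)
  have perk: "ds k (t + 2*pi) = ds k t" for k t
  proof (induction k arbitrary: t)
    case 0 thus ?case using per ds0 by simp
  next
    case (Suc k)
    have "((ds k \<circ> (\<lambda>t. t + 2*pi)) has_vector_derivative (1::real) *\<^sub>R ds (Suc k) (t + 2*pi)) (at t)"
      by (rule vector_diff_chain_at) (auto intro!: derivative_eq_intros der)
    moreover have "(ds k \<circ> (\<lambda>t. t + 2*pi)) = ds k" using Suc by (auto simp: o_def)
    ultimately have "(ds k has_vector_derivative ds (Suc k) (t + 2*pi)) (at t)" by simp
    thus ?case using der vector_derivative_unique_at by metis
  qed
  have fcN: "fourier_coeff (ds k) \<tau> = (\<i> * of_int \<tau>)^k * fourier_coeff c \<tau>" for k \<tau>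
  proof (induction k)
    case 0 thus ?case using ds0 by simp
  next
    case (Suc k)
    have "fourier_coeff (ds (Suc k)) \<tau> = \<i> * of_int \<tau> * fourier_coeff (ds k) \<tau>"
      by (rule fc_deriv[OF perk der cont])
    thus ?case using Suc by simp
  qed
  obtain M0 where M0: "\<And>\<tau>. norm (fourier_coeff c \<tau>) \<le> M0"
    using fc_bounded[OF cont[of 0]] ds0 by auto
  obtain MN where MN: "\<And>\<tau>. norm (fourier_coeff (ds N) \<tau>) \<le> MN"
    using fc_bounded[OF cont[of N]] by auto
  have "norm (fourier_coeff c s) * (1 + \<bar>real_of_int s\<bar>)^N \<le> 2^N * (M0 + MN)" for s
  proof -
    have "norm (fourier_coeff c s) * (1 + \<bar>real_of_int s\<bar>)^N
        \<le> norm (fourier_coeff c s) * (2^N * (1 + \<bar>real_of_int s\<bar>^N))"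
      by (intro mult_left_mono pow_split) auto
    also have "\<dots> = 2^N * (norm (fourier_coeff c s) + norm (fourier_coeff (ds N) s))"
    proof -
      have "norm (fourier_coeff (ds N) s) = \<bar>real_of_int s\<bar>^N * norm (fourier_coeff c s)"
        by (simp add: fcN norm_mult norm_power)
      thus ?thesis by (simp add: distrib_left distrib_right mult.commute mult.left_commute)
    qed
    also have "\<dots> \<le> 2^N * (M0 + MN)"
      by (intro mult_left_mono add_mono M0 MN) auto
    finally show ?thesis .
  qed
  thus ?thesis by blast
qed

definition rv :: "int^'n::finite \<Rightarrow> real^'n" where "rv \<xi> = (\<chi> i. real_of_int (\<xi>$i))"

lemma znorm_rv: "znorm \<xi> = norm (rv \<xi>)"
  unfolding znorm_def norm_vec_def L2_set_def rv_def by simp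

lemma znorm1_eq: "znorm1 (\<tau>,\<xi>) = norm (real_of_int \<tau>, rv \<xi>)"
  unfolding znorm1_def norm_Pair znorm_rv by simp

lemma znorm_nonneg: "znorm \<xi> \<ge> 0" by (simp add: znorm_rv)
lemma znorm1_nonneg: "znorm1 z \<ge> 0" by (cases z) (simp add: znorm1_eq)

lemma znorm_le: "znorm \<xi> \<le> znorm1 (\<tau>,\<xi>)"
  unfolding znorm1_eq znorm_rv norm_Pair by (simp add: real_le_rsqrt)

lemma abs_le_znorm1: "\<bar>real_of_int \<tau>\<bar> \<le> znorm1 (\<tau>,\<xi>)"
  unfolding znorm1_eq norm_Pair by (simp add: real_le_rsqrt)

lemma peetre: "1 + znorm1 (\<tau>,\<xi>) \<le> (1 + \<bar>real_of_int (\<tau>-\<sigma>)\<bar>) * (1 + znorm1 (\<sigma>,\<xi>))"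
proof -
  have "(real_of_int \<tau>, rv \<xi>) = (real_of_int (\<tau>-\<sigma>), 0) + (real_of_int \<sigma>, rv \<xi>)" by simp
  hence "znorm1 (\<tau>,\<xi>) \<le> norm (real_of_int (\<tau>-\<sigma>), 0::real^'a) + znorm1 (\<sigma>,\<xi>)"
    unfolding znorm1_eq by (metis norm_triangle_ineq)
  hence "znorm1 (\<tau>,\<xi>) \<le> \<bar>real_of_int (\<tau>-\<sigma>)\<bar> + znorm1 (\<sigma>,\<xi>)"
    by (simp add: norm_Pair)
  moreover have "0 \<le> \<bar>real_of_int (\<tau>-\<sigma>)\<bar> * znorm1 (\<sigma>,\<xi>)" by (simp add: znorm1_nonneg)
  ultimately show ?thesis by (simp add: algebra_simps)
qed

lemma znorm_ge1: assumes "\<xi> \<noteq> 0" shows "1 \<le> znorm \<xi>"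
proof -
  obtain i where i: "\<xi>$i \<noteq> 0" using assms by (metis vec_eq_iff zero_index)
  have "1 \<le> (real_of_int (\<xi>$i))\<^sup>2"
  proof -
    have "1 \<le> \<bar>\<xi>$i\<bar>" using i by linarith
    hence "1 \<le> \<bar>real_of_int (\<xi>$i)\<bar>" by linarith
    hence "1 \<le> \<bar>real_of_int (\<xi>$i)\<bar>^2" by (rule one_le_power)
    thus ?thesis by simp
  qed
  also have "\<dots> \<le> (\<Sum>j\<in>UNIV. (real_of_int (\<xi> $ j))\<^sup>2)"
    by (rule member_le_sum) auto
  finally show ?thesis unfolding znorm_def by (simp add: real_le_rsqrt)
qed

lemma p_poly:
  assumes "\<exists>C>0. \<exists>\<nu>::real. \<forall>\<xi>. \<xi> \<noteq> 0 \<longrightarrow> norm (p \<xi>) \<le> C * znorm \<xi> powr \<nu>"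
  shows "\<exists>Q K. \<forall>\<xi>. norm (p \<xi>) \<le> Q * (1 + znorm \<xi>)^K"
proof -
  obtain C \<nu> where C: "C > 0" and b: "\<And>\<xi>. \<xi> \<noteq> 0 \<Longrightarrow> norm (p \<xi>) \<le> C * znorm \<xi> powr \<nu>"
    using assms by blast
  define K where "K = nat \<lceil>\<nu>\<rceil>"
  define Q where "Q = C + norm (p 0)"
  have "norm (p \<xi>) \<le> Q * (1 + znorm \<xi>)^K" for \<xi>
  proof (cases "\<xi> = 0")
    case True
    have "norm (p 0) \<le> Q" unfolding Q_def using C by simp
    also have "Q \<le> Q * (1 + znorm \<xi>)^K"
    proof -
      have "1 \<le> (1 + znorm \<xi>)^K" by (rule one_le_power) (use znorm_nonneg[of \<xi>] in simp)
      moreover have "Q \<ge> 0" unfolding Q_def using C by simp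
      ultimately show ?thesis by (metis mult_left_mono mult_1_right)
    qed
    finally show ?thesis using True by simp
  next
    case False
    have z1: "1 \<le> znorm \<xi>" by (rule znorm_ge1[OF False])
    have "znorm \<xi> powr \<nu> \<le> (1 + znorm \<xi>)^K"
    proof -
      have "znorm \<xi> powr \<nu> \<le> znorm \<xi> powr (real K)"
      proof (rule powr_mono)
        have "\<nu> \<le> of_int \<lceil>\<nu>\<rceil>" by (rule le_of_int_ceiling)
        also have "\<dots> \<le> real (nat \<lceil>\<nu>\<rceil>)" by linarith
        finally show "\<nu> \<le> real K" unfolding K_def .
      qed (use z1 in auto)
      also have "\<dots> = znorm \<xi> ^ K" using z1 by (simp add: powr_realpow)
      also have "\<dots> \<le> (1 + znorm \<xi>)^K" using z1 by (intro power_mono) auto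
      finally show ?thesis .
    qed
    hence "norm (p \<xi>) \<le> C * (1 + znorm \<xi>)^K" using b[OF False] C
      by (meson mult_left_mono less_imp_le order_trans)
    also have "\<dots> \<le> Q * (1 + znorm \<xi>)^K"
      using znorm_nonneg[of \<xi>] by (intro mult_right_mono) (auto simp: Q_def)
    finally show ?thesis .
  qed
  thus ?thesis by blast
qed

lemma bij_minus: "bij_betw (\<lambda>\<sigma>::int. \<tau> - \<sigma>) UNIV UNIV"
  by (rule bij_betw_byWitness[where f'="\<lambda>s. \<tau> - s"]) auto

lemma Lop_smooth:
  fixes c :: "real \<Rightarrow> complex" and p :: "int^'n::finite \<Rightarrow> complex"
  assumes rap: "\<And>N. \<exists>A. \<forall>s. norm (fourier_coeff c s) * (1 + \<bar>real_of_int s\<bar>)^N \<le> A"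
    and pb: "\<And>\<xi>. norm (p \<xi>) \<le> Q * (1 + znorm \<xi>)^K"
    and u: "is_smooth u"
  shows "is_smooth (Lop c p u)"
  unfolding is_smooth_def
proof
  fix M :: nat
  define a where "a = fourier_coeff c"
  obtain B1 where B1: "\<And>z. norm (u z) * (1 + znorm1 z)^(M+K) \<le> B1"
    using u unfolding is_smooth_def by blast
  obtain B2 where B2: "\<And>z. norm (u z) * (1 + znorm1 z)^(Suc M) \<le> B2"
    using u unfolding is_smooth_def by blast
  obtain A where A: "\<And>s. norm (a s) * (1 + \<bar>real_of_int s\<bar>)^(M+2) \<le> A"
    using rap unfolding a_def by blast
  define g where "g = (\<lambda>s::int. 1 / (1 + \<bar>real_of_int s\<bar>)^2)"
  define S where "S = infsum g UNIV"
  have gs: "g summable_on UNIV" unfolding g_def by (rule int_sq_summable)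
  have Q0: "Q \<ge> 0"
  proof -
    have "0 \<le> Q * (1 + znorm (0::int^'n))^K" using pb[of 0] norm_ge_zero order_trans by blast
    moreover have "(1 + znorm (0::int^'n))^K > 0" using znorm_nonneg[of "0::int^'n"] by simp
    ultimately show ?thesis by (simp add: zero_le_mult_iff)
  qed
  have B10: "B1 \<ge> 0" using B1[of "(0,0)"] znorm1_nonneg[of "(0::int,0::int^'n)"]
    by (meson norm_ge_zero order_trans zero_le_mult_iff zero_le_power add_nonneg_nonneg zero_le_one)
  have A0: "A \<ge> 0" using A[of 0] by (meson norm_ge_zero order_trans zero_le_mult_iff zero_le_power abs_ge_zero add_nonneg_nonneg zero_le_one)
  show "\<exists>C. \<forall>z. norm (Lop c p u z) * (1 + znorm1 z)^M \<le> C"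
  proof (intro exI allI)
    fix z :: "int \<times> (int^'n)"
    obtain \<tau> \<xi> where z: "z = (\<tau>, \<xi>)" by (cases z)
    define W where "W = 1 + znorm1 (\<tau>,\<xi>)"
    have W1: "W \<ge> 1" unfolding W_def using znorm1_nonneg by simp
    define f where "f = (\<lambda>\<sigma>. a (\<tau> - \<sigma>) * p \<xi> * u (\<sigma>, \<xi>))"
    have key: "norm (f \<sigma>) * W^M \<le> Q*B1*A * g (\<tau> - \<sigma>)" for \<sigma>
    proof -
      define V where "V = 1 + znorm1 (\<sigma>,\<xi>)"
      define D where "D = 1 + \<bar>real_of_int (\<tau>-\<sigma>)\<bar>"
      have V1: "V \<ge> 1" unfolding V_def using znorm1_nonneg by simp
      have D1: "D \<ge> 1" unfolding D_def by simp
      have WM: "W^M \<le> D^M * V^M"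
        unfolding power_mult_distrib[symmetric] W_def D_def V_def
        by (intro power_mono peetre) (use W1 W_def in auto)
      have pV: "norm (p \<xi>) \<le> Q * V^K"
        using pb[of \<xi>] znorm_le[of \<xi> \<sigma>] znorm_nonneg[of \<xi>] Q0
        by (smt (verit, best) V_def mult_left_mono power_mono)
      have uV: "norm (u (\<sigma>,\<xi>)) * V^(M+K) \<le> B1" using B1 unfolding V_def .
      have aD: "norm (a (\<tau>-\<sigma>)) * D^(M+2) \<le> A" using A unfolding D_def .
      have "norm (f \<sigma>) * W^M = norm (a (\<tau>-\<sigma>)) * norm (p \<xi>) * norm (u (\<sigma>,\<xi>)) * W^M"
        unfolding f_def by (simp add: norm_mult)
      also have "\<dots> \<le> norm (a (\<tau>-\<sigma>)) * (Q * V^K) * norm (u (\<sigma>,\<xi>)) * (D^M * V^M)"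
        by (intro mult_mono pV WM mult_left_mono) (use Q0 D1 V1 W1 in auto)
      also have "\<dots> = Q * (norm (a (\<tau>-\<sigma>)) * D^M) * (norm (u (\<sigma>,\<xi>)) * V^(M+K))"
        by (simp add: power_add algebra_simps)
      also have "\<dots> \<le> Q * (norm (a (\<tau>-\<sigma>)) * D^M) * B1"
        by (intro mult_left_mono uV) (use Q0 D1 in auto)
      finally have c1: "norm (f \<sigma>) * W^M \<le> Q * (norm (a (\<tau>-\<sigma>)) * D^M) * B1" .
      have "norm (a (\<tau>-\<sigma>)) * D^M = (norm (a (\<tau>-\<sigma>)) * D^(M+2)) / D^2"
        using D1 by (simp add: power_add power2_eq_square field_simps)
      also have "\<dots> \<le> A / D^2"
        by (intro divide_right_mono aD) auto
      also have "A / D^2 = A * g (\<tau> - \<sigma>)" unfolding g_def D_def by simp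
      finally have c2: "norm (a (\<tau>-\<sigma>)) * D^M \<le> A * g (\<tau> - \<sigma>)" .
      have "Q * (norm (a (\<tau>-\<sigma>)) * D^M) * B1 \<le> Q * (A * g (\<tau> - \<sigma>)) * B1"
        using Q0 B10 c2 by (intro mult_right_mono mult_left_mono) auto
      with c1 show ?thesis by (simp add: algebra_simps)
    qed
    define h where "h = (\<lambda>\<sigma>. (Q*B1*A / W^M) * g (\<tau> - \<sigma>))"
    have gts: "(\<lambda>\<sigma>. g (\<tau> - \<sigma>)) summable_on UNIV"
      using summable_on_reindex_bij_betw[OF bij_minus[of \<tau>], of g] gs by simp
    have gti: "infsum (\<lambda>\<sigma>. g (\<tau> - \<sigma>)) UNIV = S"
      unfolding S_def by (rule infsum_reindex_bij_betw[OF bij_minus])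
    have hs: "h summable_on UNIV" unfolding h_def by (intro summable_on_cmult_right gts)
    have hi: "infsum h UNIV = (Q*B1*A / W^M) * S"
      unfolding h_def by (subst infsum_cmult_right) (use gts gti in auto)
    have fh: "norm (f \<sigma>) \<le> h \<sigma>" for \<sigma>
      using key[of \<sigma>] W1 unfolding h_def by (simp add: field_simps)
    have g0: "g s \<ge> 0" for s unfolding g_def by simp
    have h0: "h \<sigma> \<ge> 0" for \<sigma> unfolding h_def using Q0 B10 A0 g0 W1 by simp
    have fas: "(\<lambda>x. norm (f x)) summable_on UNIV"
      by (rule summable_on_comparison_test[OF hs]) (use fh in auto)
    hence fs: "f summable_on UNIV" by (rule abs_summable_summable)
    have nf: "norm (infsum f UNIV) \<le> (Q*B1*A / W^M) * S"
      using norm_infsum_le[OF has_sum_infsum[OF fs] has_sum_infsum[OF hs]] fh hi by simp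
    have L: "Lop c p u z = of_int \<tau> * u (\<tau>,\<xi>) + infsum f UNIV"
      unfolding Lop_def z f_def a_def by simp
    have "norm (Lop c p u z) * (1 + znorm1 z)^M \<le> (\<bar>real_of_int \<tau>\<bar> * norm (u (\<tau>,\<xi>)) + (Q*B1*A / W^M) * S) * W^M"
    proof -
      have "norm (Lop c p u z) \<le> \<bar>real_of_int \<tau>\<bar> * norm (u (\<tau>,\<xi>)) + (Q*B1*A / W^M) * S"
        unfolding L using nf norm_triangle_ineq[of "of_int \<tau> * u (\<tau>,\<xi>)" "infsum f UNIV"]
        by (simp add: norm_mult)
      thus ?thesis unfolding z W_def[symmetric] by (rule mult_right_mono) (use W1 in simp)
    qed
    also have "\<dots> = \<bar>real_of_int \<tau>\<bar> * norm (u (\<tau>,\<xi>)) * W^M + Q*B1*A*S"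
      using W1 by (simp add: field_simps)
    also have "\<bar>real_of_int \<tau>\<bar> * norm (u (\<tau>,\<xi>)) * W^M \<le> W * norm (u (\<tau>,\<xi>)) * W^M"
      using abs_le_znorm1[of \<tau> \<xi>] W1 unfolding W_def by (intro mult_right_mono) auto
    also have "W * norm (u (\<tau>,\<xi>)) * W^M \<le> B2"
      using B2[of "(\<tau>,\<xi>)"] unfolding W_def by (simp add: algebra_simps)
    finally show "norm (Lop c p u z) * (1 + znorm1 z)^M \<le> B2 + Q*B1*A*S" by simp
  qed
qed

lemma Lprod_smooth:
  assumes "\<And>j v. 1 \<le> j \<Longrightarrow> j \<le> n \<Longrightarrow> is_smooth v \<Longrightarrow> is_smooth (Lop (c j) (p j) v)"
    and "is_smooth v"
  shows "is_smooth (Lprod c p n v)"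
  using assms
proof (induction n arbitrary: v)
  case 0 thus ?case by simp
next
  case (Suc n)
  have "is_smooth (Lop (c (Suc n)) (p (Suc n)) v)" using Suc.prems by simp
  hence "is_smooth (Lprod c p n (Lop (c (Suc n)) (p (Suc n)) v))"
    using Suc.IH Suc.prems(1) by simp
  thus ?case by simp
qed

theorem theorem10:
  fixes c :: "nat \<Rightarrow> real \<Rightarrow> complex"
    and p :: "nat \<Rightarrow> int ^ 'n \<Rightarrow> complex"
    and u :: "nat \<Rightarrow> 'n coef"
    and m k :: nat
  assumes "m \<ge> 1"
    and c_smooth: "\<forall>j\<in>{1..m}. smooth_periodic (c j)"
    and p_bound: "\<forall>j\<in>{1..m}. \<exists>C>0. \<exists>\<nu>::real. \<forall>\<xi>. \<xi> \<noteq> 0 \<longrightarrow> norm (p j \<xi>) \<le> C * znorm \<xi> powr \<nu>"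
    and Im_bound: "\<forall>j\<in>{1..m}. \<exists>\<eta>>0. \<forall>t \<xi>. Im (c j t * p j \<xi>) \<ge> - \<eta>"
    and k: "k \<in> {1..m}"
    and sing: "is_distr (u k)" "\<not> is_smooth (u k)" "is_smooth (Lop (c k) (p k) (u k))"
    and distrs: "\<forall>i\<in>{k+1..m}. is_distr (u i)"
    and chain: "\<forall>j<m-k. u (k+j) = Lop (c (k+j+1)) (p (k+j+1)) (u (k+j+1))"
  shows "\<not> globally_hypoelliptic (Lprod c p m)"
proof
  assume gh: "globally_hypoelliptic (Lprod c p m)"
  have Ls: "is_smooth (Lop (c j) (p j) v)" if "1 \<le> j" "j \<le> m" "is_smooth v" for j v
  proof -
    have j: "j \<in> {1..m}" using that by simp
    obtain Q K where QK: "\<forall>\<xi>. norm (p j \<xi>) \<le> Q * (1 + znorm \<xi>)^K"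
      using p_poly[of "p j"] p_bound j by blast
    have cs: "smooth_periodic (c j)" using c_smooth j by blast
    show ?thesis
      by (rule Lop_smooth[where Q=Q and K=K]) (use fc_rapid[OF cs] QK that(3) in auto)
  qed
  have ch2: "Lprod c p (k+j) (u (k+j)) = Lprod c p k (u k)" if "j \<le> m-k" for j
    using that
  proof (induction j)
    case 0 thus ?case by simp
  next
    case (Suc j)
    have "u (k+j) = Lop (c (k+j+1)) (p (k+j+1)) (u (k+j+1))" using chain Suc.prems by simp
    hence "Lprod c p (k + Suc j) (u (k + Suc j)) = Lprod c p (k+j) (u (k+j))" by simp
    thus ?case using Suc by simp
  qed
  have km: "1 \<le> k" "k \<le> m" using k by auto
  have "Lprod c p k (u k) = Lprod c p (k-1) (Lop (c k) (p k) (u k))"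
  proof -
    obtain k' where "k = Suc k'" using km by (cases k) auto
    thus ?thesis by simp
  qed
  moreover have "is_smooth (Lprod c p (k-1) (Lop (c k) (p k) (u k)))"
    by (rule Lprod_smooth) (use Ls sing(3) km in auto)
  ultimately have "is_smooth (Lprod c p m (u m))"
    using ch2[of "m-k"] km by simp
  moreover have "is_distr (u m)"
  proof (cases "m = k")
    case True thus ?thesis using sing by simp
  next
    case False thus ?thesis using distrs km by auto
  qed
  ultimately have um: "is_smooth (u m)" using gh unfolding globally_hypoelliptic_def by blast
  have bk: "is_smooth (u (m - i))" if "i \<le> m - k" for i
    using that
  proof (induction i)
    case 0 thus ?case using um by simp
  next
    case (Suc i)
    define j where "j = m - k - Suc i"
    have j: "j < m - k" using Suc.prems unfolding j_def by simp
    have e1: "k + j = m - Suc i" and e2: "k + j + 1 = m - i" using Suc.prems km unfolding j_def by auto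
    have "u (k+j) = Lop (c (k+j+1)) (p (k+j+1)) (u (k+j+1))" using chain j by simp
    moreover have "is_smooth (Lop (c (k+j+1)) (p (k+j+1)) (u (k+j+1)))"
      by (rule Ls) (use e2 Suc km in auto)
    ultimately show ?case using e1 by simp
  qed
  from bk[of "m-k"] km have "is_smooth (u k)" by simp
  with sing(2) show False by simp
qed

end
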